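(* Let $X$ be a pointed fibrant space over $B$ with section $s_X:B\to X$. Then $\mathrm{cat}^*_B(X)=\mathrm{secat}(s_X)$.
   Context: A fibrewise space over $B$ is a space $X$ with a map $p_X:X\to B$; a fibrewise pointed space is one with a section $s_X:B\to X$ of $p_X$. It is a pointed fibrant space over $B$ if moreover $p_X$ is a Hurewicz fibration. A fibrewise homotopy is a homotopy $H:U\times[0,1]\to X$ with $p_X(H(u,t))=p_U(u)$ for all $t$; write $\simeq_B$. $\mathrm{cat}^*_B(X)$ (fibrewise unpointed LS category): least $n$ such that $X$ is covered by $n+1$ open sets $U_i$ with the inclusion $U_i\hookrightarrow X$ fibrewise homotopic to $s_X\circ p_X|_{U_i}$ ($\infty$ if none). $\mathrm{secat}(g)$ for a map $g:Y\to Z$: least $n$ such that $Z$ is covered by $n+1$ open sets $U$ each admitting a map $s:U\to Y$ with $g\circ s$ homotopic to the inclusion $U\hookrightarrow Z$ ($\infty$ if none). *)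

theory Defs
  imports "HOL-Analysis.Analysis" "HOL-Library.Extended_Nat"
begin

definition hurewicz_fibration :: "'a topology \<Rightarrow> 'b topology \<Rightarrow> ('a \<Rightarrow> 'b) \<Rightarrow> bool" where
  "hurewicz_fibration X B p \<longleftrightarrow>
     continuous_map X B p \<and>
     (\<forall>(Z :: ('a \<times> real) topology) f G.
        continuous_map Z X f \<and>
        continuous_map (prod_topology (top_of_set {0..1::real}) Z) B G \<and>
        (\<forall>z\<in>topspace Z. G (0, z) = p (f z))
        \<longrightarrow> (\<exists>F. continuous_map (prod_topology (top_of_set {0..1::real}) Z) X F \<and>
                 (\<forall>z\<in>topspace Z. F (0, z) = f z) \<and>
                 (\<forall>t\<in>{0..1}. \<forall>z\<in>topspace Z. p (F (t, z)) = G (t, z))))"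

definition pointed_fibrant :: "'a topology \<Rightarrow> 'b topology \<Rightarrow> ('a \<Rightarrow> 'b) \<Rightarrow> ('b \<Rightarrow> 'a) \<Rightarrow> bool" where
  "pointed_fibrant X B p s \<longleftrightarrow>
     continuous_map X B p \<and> continuous_map B X s \<and>
     (\<forall>b\<in>topspace B. p (s b) = b) \<and> hurewicz_fibration X B p"

definition fw_homotopic_on :: "'a topology \<Rightarrow> ('a \<Rightarrow> 'b) \<Rightarrow> 'a set \<Rightarrow> ('a \<Rightarrow> 'a) \<Rightarrow> ('a \<Rightarrow> 'a) \<Rightarrow> bool" where
  "fw_homotopic_on X p U f g \<longleftrightarrow>
     homotopic_with (\<lambda>k. \<forall>u\<in>U. p (k u) = p u) (subtopology X U) X f g"

text \<open>Fibrewise unpointed LS category \<open>cat\<^sup>*\<^sub>B(X)\<close> (\<open>\<infinity>\<close> if no such cover exists).\<close>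
definition fw_cat :: "'a topology \<Rightarrow> ('a \<Rightarrow> 'b) \<Rightarrow> ('b \<Rightarrow> 'a) \<Rightarrow> enat" where
  "fw_cat X p s = (INF n \<in> {n. \<exists>U :: nat \<Rightarrow> 'a set.
        (\<forall>i\<le>n. openin X (U i) \<and> fw_homotopic_on X p (U i) id (s \<circ> p)) \<and>
        topspace X \<subseteq> (\<Union>i\<le>n. U i)}. enat n)"

text \<open>Sectional category of \<open>g : Y \<rightarrow> Z\<close> (\<open>\<infinity>\<close> if no such cover exists).\<close>
definition secat :: "'c topology \<Rightarrow> 'd topology \<Rightarrow> ('c \<Rightarrow> 'd) \<Rightarrow> enat" where
  "secat Y Z g = (INF n \<in> {n. \<exists>U :: nat \<Rightarrow> 'd set.
        (\<forall>i\<le>n. openin Z (U i) \<and>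
           (\<exists>\<sigma>. continuous_map (subtopology Z (U i)) Y \<sigma> \<and>
                homotopic_with (\<lambda>_. True) (subtopology Z (U i)) Z (g \<circ> \<sigma>) id)) \<and>
        topspace Z \<subseteq> (\<Union>i\<le>n. U i)}. enat n)"

end

theory Submission
  imports Defs
begin

lemma cont_snd_real: "continuous_map (prod_topology A (top_of_set (S::real set))) euclideanreal snd"
  by (metis continuous_map_snd continuous_map_into_fulltopology)
lemma cont_fst_real: "continuous_map (prod_topology (top_of_set (S::real set)) A) euclideanreal fst"
  by (metis continuous_map_fst continuous_map_into_fulltopology)

lemma key:
  fixes X :: "'a topology" and B :: "'b topology"
  assumes pf: "pointed_fibrant X B p s" and U: "openin X U"
    and sig: "continuous_map (subtopology X U) B \<sigma>"
    and hom: "homotopic_with (\<lambda>_. True) (subtopology X U) X (s \<circ> \<sigma>) id"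
  shows "fw_homotopic_on X p U id (s \<circ> p)"
proof -
  define I where "I = top_of_set {0..1::real}"
  define XU where "XU = subtopology X U"
  have UX: "U \<subseteq> topspace X" using U openin_subset by blast
  have tXU: "topspace XU = U" using UX by (simp add: XU_def Int_absorb1)
  have pc: "continuous_map X B p" and sc: "continuous_map B X s"
    and ps: "\<And>b. b \<in> topspace B \<Longrightarrow> p (s b) = b" and hf: "hurewicz_fibration X B p"
    using pf by (auto simp: pointed_fibrant_def)
  obtain H0 where H0c: "continuous_map (prod_topology I XU) X H0"
    and H00: "\<And>x. H0 (0, x) = s (\<sigma> x)" and H01: "\<And>x. H0 (1, x) = x"
    using hom unfolding homotopic_with_def I_def XU_def by auto
  define Z :: "('a \<times> real) topology" where "Z = prod_topology XU I"
  define f where "f = (\<lambda>z. if snd z \<le> 1/2 then H0 (1 - 2 * snd z, fst z)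
                           else s (p (H0 (2 * snd z - 1, fst z))))"
  define Gb where "Gb = (\<lambda>w::real \<times> ('a \<times> real).
        p (H0 (min 1 (\<bar>1 - 2 * snd (snd w)\<bar> + 2 * fst w), fst (snd w))))"
  have tZ: "topspace Z = U \<times> {0..1}" by (simp add: Z_def I_def tXU)
  have sZ: "continuous_map Z euclideanreal snd" unfolding Z_def I_def by (rule cont_snd_real)
  have fc: "continuous_map Z X f"
    unfolding f_def
  proof (rule continuous_map_cases_le)
    show "continuous_map Z euclideanreal snd" unfolding Z_def I_def by (rule cont_snd_real)
    show "continuous_map Z euclideanreal (\<lambda>x. 1/2)" by simp
    show "continuous_map (subtopology Z {x \<in> topspace Z. snd x \<le> 1 / 2}) X
          (\<lambda>z. H0 (1 - 2 * snd z, fst z))"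
    proof (rule continuous_map_compose[OF _ H0c, unfolded o_def])
      show "continuous_map (subtopology Z {x \<in> topspace Z. snd x \<le> 1 / 2}) (prod_topology I XU)
        (\<lambda>x. (1 - 2 * snd x, fst x))"
      proof (intro continuous_map_pairedI)
        show "continuous_map (subtopology Z {x \<in> topspace Z. snd x \<le> 1 / 2}) I (\<lambda>x. 1 - 2 * snd x)"
          unfolding I_def continuous_map_in_subtopology
          apply (intro conjI continuous_map_from_subtopology continuous_intros continuous_map_real_mult_left sZ)
          by (auto simp: tZ)
        show "continuous_map (subtopology Z {x \<in> topspace Z. snd x \<le> 1 / 2}) XU fst"
          by (intro continuous_map_from_subtopology) (simp add: Z_def continuous_map_fst)
      qed
    qed
    show "continuous_map (subtopology Z {x \<in> topspace Z. 1/2 \<le> snd x}) X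
          (\<lambda>z. s (p (H0 (2 * snd z - 1, fst z))))"
    proof (rule continuous_map_compose[OF _ continuous_map_compose[OF H0c continuous_map_compose[OF pc sc]], unfolded o_def])
      show "continuous_map (subtopology Z {x \<in> topspace Z. 1/2 \<le> snd x}) (prod_topology I XU)
        (\<lambda>x. (2 * snd x - 1, fst x))"
      proof (intro continuous_map_pairedI)
        show "continuous_map (subtopology Z {x \<in> topspace Z. 1/2 \<le> snd x}) I (\<lambda>x. 2 * snd x - 1)"
          unfolding I_def continuous_map_in_subtopology
          apply (intro conjI continuous_map_from_subtopology continuous_intros continuous_map_real_mult_left sZ)
          by (auto simp: tZ)
        show "continuous_map (subtopology Z {x \<in> topspace Z. 1/2 \<le> snd x}) XU fst"
          by (intro continuous_map_from_subtopology) (simp add: Z_def continuous_map_fst)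
      qed
    qed
    show "\<And>x. x \<in> topspace Z \<Longrightarrow> snd x = 1 / 2 \<Longrightarrow> H0 (1 - 2 * snd x, fst x) = s (p (H0 (2 * snd x - 1, fst x)))"
    proof -
      fix x assume x: "x \<in> topspace Z" "snd x = 1 / 2"
      then have e: "1 - 2 * snd x = 0" "2 * snd x - 1 = 0" by auto
      have "fst x \<in> topspace (subtopology X U)" using x tZ tXU XU_def by auto
      then have "\<sigma> (fst x) \<in> topspace B" using sig by (auto simp: continuous_map_def Pi_iff)
      then show "H0 (1 - 2 * snd x, fst x) = s (p (H0 (2 * snd x - 1, fst x)))"
        by (simp add: e H00 ps)
    qed
  qed
  have fstI: "continuous_map (prod_topology I Z) euclideanreal fst"
    unfolding I_def by (rule cont_fst_real)
  have sndsnd: "continuous_map (prod_topology I Z) euclideanreal (\<lambda>w. snd (snd w))"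
    using continuous_map_compose[OF continuous_map_snd sZ] by (simp add: o_def)
  have fstsnd: "continuous_map (prod_topology I Z) XU (\<lambda>w. fst (snd w))"
    using continuous_map_compose[OF continuous_map_snd continuous_map_fst] unfolding Z_def by (simp add: o_def)
  have Gbc: "continuous_map (prod_topology I Z) B Gb"
    unfolding Gb_def
  proof (rule continuous_map_compose[OF _ continuous_map_compose[OF H0c pc], unfolded o_def])
    show "continuous_map (prod_topology I Z) (prod_topology I XU)
       (\<lambda>w. (min 1 (\<bar>1 - 2 * snd (snd w)\<bar> + 2 * fst w), fst (snd w)))"
    proof (intro continuous_map_pairedI fstsnd)
      show "continuous_map (prod_topology I Z) I (\<lambda>w. min 1 (\<bar>1 - 2 * snd (snd w)\<bar> + 2 * fst w))"
        unfolding I_def continuous_map_in_subtopology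
        apply (intro conjI continuous_intros continuous_map_real_mult_left sndsnd[unfolded I_def] fstI[unfolded I_def])
        by (auto simp: tZ)
    qed
  qed
  have fGb: "\<forall>z\<in>topspace Z. Gb (0, z) = p (f z)"
  proof
    fix z assume z: "z \<in> topspace Z"
    then have z01: "0 \<le> snd z" "snd z \<le> 1" "fst z \<in> U" using tZ by auto
    show "Gb (0, z) = p (f z)"
    proof (cases "snd z \<le> 1/2")
      case True
      then show ?thesis using z01 by (simp add: Gb_def f_def)
    next
      case False
      have "(2 * snd z - 1, fst z) \<in> topspace (prod_topology I XU)"
        using False z01 tXU by (auto simp: I_def)
      then have "H0 (2 * snd z - 1, fst z) \<in> topspace X"
        using H0c by (auto simp: continuous_map_def Pi_iff)
      then have "p (H0 (2 * snd z - 1, fst z)) \<in> topspace B"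
        using pc by (auto simp: continuous_map_def Pi_iff)
      then show ?thesis using False z01 by (simp add: Gb_def f_def ps)
    qed
  qed
  obtain F where Fc: "continuous_map (prod_topology I Z) X F"
    and F0: "\<forall>z\<in>topspace Z. F (0, z) = f z"
    and Fp: "\<forall>t\<in>{0..1}. \<forall>z\<in>topspace Z. p (F (t, z)) = Gb (t, z)"
    using hf fc Gbc fGb unfolding hurewicz_fibration_def I_def by blast
  define K where "K = (\<lambda>w::real \<times> 'a. F (min (fst w) (1 - fst w), (snd w, fst w)))"
  have Kc: "continuous_map (prod_topology I XU) X K"
    unfolding K_def
  proof (rule continuous_map_compose[OF _ Fc, unfolded o_def])
    have f1: "continuous_map (prod_topology I XU) euclideanreal fst"
      unfolding I_def by (rule cont_fst_real)
    show "continuous_map (prod_topology I XU) (prod_topology I Z)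
       (\<lambda>w. (min (fst w) (1 - fst w), snd w, fst w))"
    proof (intro continuous_map_pairedI)
      show "continuous_map (prod_topology I XU) I (\<lambda>w. min (fst w) (1 - fst w))"
        unfolding I_def continuous_map_in_subtopology
        apply (intro conjI continuous_intros f1[unfolded I_def])
        by auto
      show "continuous_map (prod_topology I XU) Z (\<lambda>w. (snd w, fst w))"
        unfolding Z_def by (intro continuous_map_pairedI continuous_map_snd continuous_map_fst)
    qed
  qed
  have "homotopic_with (\<lambda>k. \<forall>u\<in>U. p (k u) = p u) XU X (\<lambda>x. K (0, x)) (\<lambda>x. K (1, x))"
    unfolding homotopic_with_def
  proof (intro exI conjI allI ballI)
    show "continuous_map (prod_topology (top_of_set {0..1}) XU) X K" using Kc by (simp add: I_def)
    fix t u assume t: "t \<in> {0..1::real}" and u: "u \<in> U"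
    have "(u, t) \<in> topspace Z" using t u tZ by simp
    moreover have "min t (1 - t) \<in> {0..1}" using t by auto
    ultimately have "p (K (t, u)) = Gb (min t (1 - t), (u, t))"
      using Fp by (simp add: K_def)
    also have "\<dots> = p (H0 (1, u))"
      unfolding Gb_def using t by (simp add: min_def abs_if)
    finally show "p (K (t, u)) = p u" by (simp add: H01)
  qed auto
  then show ?thesis
    unfolding fw_homotopic_on_def XU_def[symmetric]
  proof (rule homotopic_with_eq)
    fix x assume x: "x \<in> topspace XU"
    then have "(x, 0) \<in> topspace Z" "(x, 1) \<in> topspace Z" using tZ tXU by auto
    then show "id x = K (0, x)" "(s \<circ> p) x = K (1, x)"
      using F0 by (auto simp: K_def f_def H01)
  next
    fix h k :: "'a \<Rightarrow> 'a" assume "\<And>x. x \<in> topspace XU \<Longrightarrow> h x = k x"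
    then show "(\<forall>u\<in>U. p (h u) = p u) = (\<forall>u\<in>U. p (k u) = p u)" using tXU by auto
  qed
qed
lemma equiv_cover:
  fixes X :: "'a topology" and B :: "'b topology"
  assumes pf: "pointed_fibrant X B p s" and U: "openin X U"
  shows "fw_homotopic_on X p U id (s \<circ> p) \<longleftrightarrow>
    (\<exists>\<sigma>. continuous_map (subtopology X U) B \<sigma> \<and>
                homotopic_with (\<lambda>_. True) (subtopology X U) X (s \<circ> \<sigma>) id)"
proof
  assume h: "fw_homotopic_on X p U id (s \<circ> p)"
  have "continuous_map (subtopology X U) B p"
    using pf by (simp add: pointed_fibrant_def continuous_map_from_subtopology)
  moreover have "homotopic_with (\<lambda>_. True) (subtopology X U) X (s \<circ> p) id"
    using h unfolding fw_homotopic_on_def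
    by (metis (mono_tags, lifting) homotopic_with_mono homotopic_with_sym)
  ultimately show "\<exists>\<sigma>. continuous_map (subtopology X U) B \<sigma> \<and>
                homotopic_with (\<lambda>_. True) (subtopology X U) X (s \<circ> \<sigma>) id" by blast
next
  assume "\<exists>\<sigma>. continuous_map (subtopology X U) B \<sigma> \<and>
                homotopic_with (\<lambda>_. True) (subtopology X U) X (s \<circ> \<sigma>) id"
  then show "fw_homotopic_on X p U id (s \<circ> p)" using key[OF pf U] by blast
qed

theorem corollary2p10:
  fixes X :: "'a topology" and B :: "'b topology"
    and p :: "'a \<Rightarrow> 'b" and s :: "'b \<Rightarrow> 'a"
  assumes "pointed_fibrant X B p s"
  shows "fw_cat X p s = secat B X s"
proof -
  note E = equiv_cover[OF assms]
  have *: "(\<forall>i\<le>n. openin X (U i) \<and> fw_homotopic_on X p (U i) id (s \<circ> p)) \<longleftrightarrow>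
        (\<forall>i\<le>n. openin X (U i) \<and>
           (\<exists>\<sigma>. continuous_map (subtopology X (U i)) B \<sigma> \<and>
                homotopic_with (\<lambda>_. True) (subtopology X (U i)) X (s \<circ> \<sigma>) id))" for n U
  proof (intro iffI allI impI conjI)
    fix i assume a: "\<forall>i\<le>n. openin X (U i) \<and> fw_homotopic_on X p (U i) id (s \<circ> p)" and i: "i \<le> n"
    then show "openin X (U i)" by blast
    then show "\<exists>\<sigma>. continuous_map (subtopology X (U i)) B \<sigma> \<and>
                homotopic_with (\<lambda>_. True) (subtopology X (U i)) X (s \<circ> \<sigma>) id"
      using E a i by blast
  next
    fix i assume a: "\<forall>i\<le>n. openin X (U i) \<and>
           (\<exists>\<sigma>. continuous_map (subtopology X (U i)) B \<sigma> \<and>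
                homotopic_with (\<lambda>_. True) (subtopology X (U i)) X (s \<circ> \<sigma>) id)" and i: "i \<le> n"
    then show "openin X (U i)" by blast
    then show "fw_homotopic_on X p (U i) id (s \<circ> p)"
      using E a i by blast
  qed
  show ?thesis unfolding fw_cat_def secat_def * ..
qed
end
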